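(* Let $\mu$ be a probability density on $\mathbb{R}^d$ and $f^*:\mathbb{R}^d\to\{\pm1\}$ satisfy the regularity assumption below, and let $\mathbf{x}_1,\dots,\mathbf{x}_m$ be i.i.d. with density $\mu$. For $\mathbf{x}\in\mathbb{R}^d$ and $k\in\mathbb{N}$, let $A^k_\mathbf{x}$ be the event that the $k$ nearest neighbors $\mathbf{x}_{(1)},\dots,\mathbf{x}_{(k)}$ of $\mathbf{x}$ among $\mathbf{x}_1,\dots,\mathbf{x}_m$ all satisfy $f^*(\mathbf{x}_{(i)})=f^*(\mathbf{x})$. Then for every fixed $k$ and for almost every $\mathbf{x}\in\mathrm{supp}(\mu)$, $\lim_{m\to\infty}\Pr[A^k_\mathbf{x}]=1$.
   Context: Regularity assumption: $\mu$ is continuous at Lebesgue-almost every point of $\mathbb{R}^d$, and for Lebesgue-almost every $\mathbf{x}$ there is a neighborhood of $\mathbf{x}$ on which $f^*$ is constant. *)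

theory Defs
  imports "HOL-Probability.Probability"
begin

definition density_support :: "('a::euclidean_space \<Rightarrow> real) \<Rightarrow> 'a set" where
  "density_support mu = {x. \<forall>e>0. emeasure (density lborel (\<lambda>y. ennreal (mu y))) (ball x e) > 0}"

text \<open>Law of the sample (x_0,...,x_{m-1}) of m i.i.d. points with density mu
(completed, so that events involving f only up to null sets are measurable).\<close>
definition sample_law :: "('a::euclidean_space \<Rightarrow> real) \<Rightarrow> nat \<Rightarrow> (nat \<Rightarrow> 'a) measure" where
  "sample_law mu m = completion (PiM {..<m} (\<lambda>_. density lborel (\<lambda>y. ennreal (mu y))))"

text \<open>Event A^k_x: every sample point among the k nearest neighbours of x (a point x_j
is among them if fewer than k sample points are strictly closer to x; ties, which have
probability zero, are all included) has the same label as x.\<close>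
definition knn_agree_event ::
    "('a::euclidean_space \<Rightarrow> int) \<Rightarrow> nat \<Rightarrow> 'a \<Rightarrow> nat \<Rightarrow> (nat \<Rightarrow> 'a) set" where
  "knn_agree_event f k x m =
     {X \<in> PiE {..<m} (\<lambda>_. UNIV).
        \<forall>j<m. card {i. i < m \<and> dist x (X i) < dist x (X j)} < k \<longrightarrow> f (X j) = f x}"

end

theory Submission imports Defs begin

lemma emeasure_PiM_const:
  assumes "prob_space M" "finite I" "\<And>i. i \<in> I \<Longrightarrow> A i \<in> sets M"
  shows "emeasure (PiM I (\<lambda>_. M)) (PiE I A) = (\<Prod>i\<in>I. emeasure M (A i))"
proof -
  interpret prob_space M by fact
  interpret product_sigma_finite "\<lambda>_. M"
    by unfold_locales
  show ?thesis using assms by (intro emeasure_PiM) auto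
qed

lemma measure_PiM_const:
  assumes "prob_space M" "finite I" "\<And>i. i \<in> I \<Longrightarrow> A i \<in> sets M"
  shows "measure (PiM I (\<lambda>_. M)) (PiE I A) = (\<Prod>i\<in>I. measure M (A i))"
proof -
  interpret prob_space M by fact
  have "emeasure (PiM I (\<lambda>_. M)) (PiE I A) = (\<Prod>i\<in>I. ennreal (measure M (A i)))"
    using emeasure_PiM_const[OF assms] by (simp add: emeasure_eq_measure)
  also have "\<dots> = ennreal (\<Prod>i\<in>I. measure M (A i))"
    by (rule prod_ennreal) simp
  finally show ?thesis by (simp add: measure_def prod_nonneg)
qed

lemma card_sum: fixes m :: nat shows "real (card {i. i<m \<and> P i}) = (\<Sum>i<m. if P i then 1 else 0)"
proof -
  have "(\<Sum>i<m. if P i then 1 else 0::real) = (\<Sum>i\<in>{i\<in>{..<m}. P i}. 1)"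
    by (rule sum.inter_filter[symmetric]) simp
  also have "{i\<in>{..<m}. P i} = {i. i<m \<and> P i}" by auto
  finally show ?thesis by simp
qed

lemma meas_S:
  fixes x :: "'a::euclidean_space" and m :: nat
  assumes "N \<in> sets borel" "V \<in> sets borel" "sets M = sets borel"
  shows "{X\<in>space (PiM {..<m} (\<lambda>_. M)). (\<forall>j\<in>{..<m}. X j \<notin> N) \<and> (\<forall>j\<in>{..<m}. (\<Sum>i<m. if dist x (X i) < dist x (X j) then 1 else 0::real) < real k \<longrightarrow> X j \<in> V)} \<in> sets (PiM {..<m} (\<lambda>_. M))"
proof -
  have [measurable]: "N \<in> sets M" "V \<in> sets M" using assms by auto
  have dm[measurable]: "(\<lambda>y. dist x y) \<in> borel_measurable M" using assms(3)
    by (subst measurable_cong_sets[OF assms(3) refl]) simp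
  have c: "(\<lambda>X. X j) \<in> measurable (PiM {..<m} (\<lambda>_. M)) M" if "j < m" for j
    using that by (intro measurable_component_singleton) auto
  have d: "(\<lambda>X. dist x (X j)) \<in> borel_measurable (PiM {..<m} (\<lambda>_. M))" if "j < m" for j
    using measurable_comp[OF c[OF that] dm] by (simp add: o_def)
  have s: "(\<lambda>X. (\<Sum>i<m. if dist x (X i) < dist x (X j) then 1 else 0::real)) \<in> borel_measurable (PiM {..<m} (\<lambda>_. M))" if "j < m" for j
  proof (rule borel_measurable_sum)
    fix i assume "i \<in> {..<m}"
    then have [measurable]: "(\<lambda>X. dist x (X i)) \<in> borel_measurable (PiM {..<m} (\<lambda>_. M))"
       "(\<lambda>X. dist x (X j)) \<in> borel_measurable (PiM {..<m} (\<lambda>_. M))" using d that by auto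
    show "(\<lambda>X. if dist x (X i) < dist x (X j) then 1 else 0::real) \<in> borel_measurable (PiM {..<m} (\<lambda>_. M))"
      by measurable
  qed
  have p1: "Measurable.pred (PiM {..<m} (\<lambda>_. M)) (\<lambda>X. X j \<notin> N)" if "j<m" for j
  proof -
    have "Measurable.pred (PiM {..<m} (\<lambda>_. M)) (\<lambda>X. X j \<in> N)"
      by (rule pred_sets2[OF \<open>N \<in> sets M\<close> c[OF that]])
    then show ?thesis by (rule pred_intros_logic)
  qed
  have p2: "Measurable.pred (PiM {..<m} (\<lambda>_. M)) (\<lambda>X. (\<Sum>i<m. if dist x (X i) < dist x (X j) then 1 else 0::real) < real k \<longrightarrow> X j \<in> V)" if "j<m" for j
  proof -
    have "Measurable.pred (PiM {..<m} (\<lambda>_. M)) (\<lambda>X. X j \<in> V)"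
      by (rule pred_sets2[OF \<open>V \<in> sets M\<close> c[OF that]])
    moreover have "Measurable.pred (PiM {..<m} (\<lambda>_. M)) (\<lambda>X. (\<Sum>i<m. if dist x (X i) < dist x (X j) then 1 else 0::real) < real k)"
      using s[OF that] by measurable
    ultimately show ?thesis by (intro pred_intros_logic)
  qed
  have "Measurable.pred (PiM {..<m} (\<lambda>_. M)) (\<lambda>X. (\<forall>j\<in>{..<m}. X j \<notin> N) \<and> (\<forall>j\<in>{..<m}. (\<Sum>i<m. if dist x (X i) < dist x (X j) then 1 else 0::real) < real k \<longrightarrow> X j \<in> V))"
    apply (intro pred_intros_logic pred_intros_finite(3))
    using p1 p2 by auto
  then show ?thesis by (simp add: pred_def)
qed

lemma knn_subset:
  fixes x :: "'a::euclidean_space" and m n k :: nat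
  assumes fc: "\<forall>y\<in>ball x e. f y = f x" and n: "0 < n" "k * n \<le> m"
    and X: "X \<in> PiE {..<m} (\<lambda>_. UNIV)"
    and G: "\<forall>t<k. \<exists>i\<in>{t*n..<t*n+n}. X i \<in> ball x e"
  shows "X \<in> knn_agree_event f k x m"
  unfolding knn_agree_event_def
proof (intro CollectI conjI X allI impI)
  fix j assume j: "j < m" and cj: "card {i. i < m \<and> dist x (X i) < dist x (X j)} < k"
  show "f (X j) = f x"
  proof (rule ccontr)
    assume ne: "f (X j) \<noteq> f x"
    then have "X j \<notin> ball x e" using fc by auto
    then have ej: "e \<le> dist x (X j)" by (simp add: dist_commute)
    define S where "S = {i. i < m \<and> dist x (X i) < e}"
    have ST: "S \<subseteq> {i. i < m \<and> dist x (X i) < dist x (X j)}"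
      using ej unfolding S_def by auto
    have "{..<k} \<subseteq> (\<lambda>i. i div n) ` S"
    proof
      fix t assume "t \<in> {..<k}"
      then have t: "t < k" by simp
      then obtain i where i: "i \<in> {t*n..<t*n+n}" "X i \<in> ball x e" using G by blast
      have "Suc t * n \<le> k * n" using t by (intro mult_le_mono1) simp
      then have "t*n + n \<le> k * n" by simp
      then have "i < m" using i n by auto
      moreover have "i div n = t" using i n
        by (intro div_nat_eqI) (auto simp: algebra_simps)
      ultimately show "t \<in> (\<lambda>i. i div n) ` S" using i unfolding S_def
        by (auto simp: dist_commute)
    qed
    moreover have "finite S" unfolding S_def by simp
    ultimately have "card {..<k} \<le> card ((\<lambda>i. i div n) ` S)"
      by (intro card_mono) auto
    then have "k \<le> card ((\<lambda>i. i div n) ` S)" by simp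
    also have "\<dots> \<le> card S" by (rule card_image_le) (auto simp: S_def)
    also have "\<dots> \<le> card {i. i < m \<and> dist x (X i) < dist x (X j)}"
      by (rule card_mono[OF _ ST]) auto
    finally show False using cj by simp
  qed
qed

lemma main_bound:
  fixes x :: "'a::euclidean_space" and m k :: nat and M :: "'a measure"
  assumes pM: "prob_space M" and sM: "sets M = sets borel" and spM: "space M = UNIV"
    and p: "p = measure M (ball x e)"
    and fc: "\<forall>y\<in>ball x e. f y = f x" and k: "0 < k" "k \<le> m"
  shows "\<exists>G \<in> sets (PiM {..<m} (\<lambda>_. M)). G \<subseteq> knn_agree_event f k x m \<and>
           measure (PiM {..<m} (\<lambda>_. M)) G \<ge> 1 - real k * (1 - p) ^ (m div k)"
proof -
  interpret M: prob_space M by fact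
  let ?P = "PiM {..<m} (\<lambda>_. M)"
  interpret P: prob_space ?P by (intro prob_space_PiM pM)
  define n where "n = m div k"
  have n: "0 < n" "k * n \<le> m" using k unfolding n_def
    by (auto simp: div_greater_zero_iff)
  define B where "B t = {t*n..<t*n+n}" for t
  have Bsub: "B t \<subseteq> {..<m}" if "t < k" for t
  proof -
    have "Suc t * n \<le> k * n" using that by (intro mult_le_mono1) simp
    then have "t*n + n \<le> k * n" by simp
    then show ?thesis using n unfolding B_def by auto
  qed
  define E where "E t = PiE {..<m} (\<lambda>i. if i \<in> B t then - ball x e else UNIV)" for t
  have ballM: "ball x e \<in> sets M" "- ball x e \<in> sets M" "UNIV \<in> sets M" using sM by auto
  have Esets: "E t \<in> sets ?P" for t
    unfolding E_def using ballM by (intro sets_PiM_I_finite) auto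
  have cb: "measure M (- ball x e) = 1 - p"
    using M.prob_compl[OF ballM(1)] spM p by (simp add: Compl_eq_Diff_UNIV)
  have Emeas: "measure ?P (E t) = (1 - p) ^ n" if "t < k" for t
  proof -
    have "measure ?P (E t) = (\<Prod>i<m. measure M (if i \<in> B t then - ball x e else UNIV))"
      unfolding E_def using ballM by (intro measure_PiM_const pM) auto
    also have "\<dots> = (\<Prod>i<m. if i \<in> B t then 1 - p else 1)"
      using cb M.prob_space spM by (intro prod.cong) auto
    also have "\<dots> = (\<Prod>i\<in>{..<m} \<inter> {i. i \<in> B t}. 1 - p) * (\<Prod>i\<in>{..<m} \<inter> - {i. i \<in> B t}. 1)"
      by (rule prod.If_cases) simp
    also have "{..<m} \<inter> {i. i \<in> B t} = B t" using Bsub[OF that] by auto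
    finally show ?thesis by (simp add: B_def)
  qed
  define G where "G = space ?P - (\<Union>t<k. E t)"
  have Gsets: "G \<in> sets ?P" unfolding G_def using Esets by auto
  have "measure ?P (\<Union>t<k. E t) \<le> (\<Sum>t<k. measure ?P (E t))"
    by (rule measure_UNION_le) (auto simp: Esets)
  also have "\<dots> = real k * (1 - p) ^ n" using Emeas by simp
  finally have U: "measure ?P (\<Union>t<k. E t) \<le> real k * (1 - p) ^ n" .
  have "measure ?P G = 1 - measure ?P (\<Union>t<k. E t)"
    unfolding G_def by (rule P.prob_compl) (auto simp: Esets)
  then have Gm: "measure ?P G \<ge> 1 - real k * (1 - p) ^ (m div k)" using U by (simp add: n_def)
  have spP: "space ?P = PiE {..<m} (\<lambda>_. UNIV)" by (simp add: space_PiM spM)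
  have "G \<subseteq> knn_agree_event f k x m"
  proof
    fix X assume XG: "X \<in> G"
    then have X: "X \<in> PiE {..<m} (\<lambda>_. UNIV)" unfolding G_def spP by auto
    show "X \<in> knn_agree_event f k x m"
    proof (rule knn_subset[OF fc n X], intro allI impI)
      fix t assume t: "t < k"
      then have "X \<notin> E t" using XG unfolding G_def by auto
      then obtain i where "i < m" "i \<in> B t" "X i \<in> ball x e"
        using X unfolding E_def by (auto simp: PiE_iff split: if_splits)
      then show "\<exists>i\<in>{t*n..<t*n+n}. X i \<in> ball x e" unfolding B_def by auto
    qed
  qed
  then show ?thesis using Gsets Gm by blast
qed

lemma div_filterlim: "0 < (k::nat) \<Longrightarrow> filterlim (\<lambda>m. m div k) sequentially sequentially"
  unfolding filterlim_at_top
proof (intro allI)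
  fix Z assume "0 < k"
  show "eventually (\<lambda>m. Z \<le> m div k) sequentially"
    unfolding eventually_sequentially
  proof (intro exI allI impI)
    fix m assume "Z * k \<le> m"
    then have "(Z*k) div k \<le> m div k" by (rule div_le_mono)
    then show "Z \<le> m div k" using \<open>0 < k\<close> by simp
  qed
qed

theorem lemma6:
  fixes mu :: "'a::euclidean_space \<Rightarrow> real" and f :: "'a \<Rightarrow> int" and k :: nat
  assumes mu_meas: "mu \<in> borel_measurable lborel"
    and mu_nonneg: "\<And>x. mu x \<ge> 0"
    and mu_prob: "(\<integral>\<^sup>+ x. ennreal (mu x) \<partial>lborel) = 1"
    and f_pm1: "\<And>x. f x \<in> {-1, 1}"
    and mu_cont: "AE x in lborel. isCont mu x"
    and f_loc_const: "AE x in lborel. \<exists>e>0. \<forall>y\<in>ball x e. f y = f x"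
  shows "AE x in lborel. x \<in> density_support mu \<longrightarrow>
           (\<lambda>m. measure (sample_law mu m) (knn_agree_event f k x m)) \<longlonglongrightarrow> 1"
proof -
  define M where "M = density lborel (\<lambda>y. ennreal (mu y))"
  have [measurable]: "mu \<in> borel_measurable lborel" by (rule mu_meas)
  have sM: "sets M = sets borel" by (simp add: M_def)
  have spM: "space M = UNIV" by (simp add: M_def)
  have pM: "prob_space M"
  proof (rule prob_spaceI)
    show "emeasure M (space M) = 1" unfolding M_def using mu_prob
      by (simp add: emeasure_density)
  qed
  interpret M: prob_space M by (rule pM)
  have law: "sample_law mu m = completion (PiM {..<m} (\<lambda>_. M))" for m
    by (simp add: sample_law_def M_def)
  define U where "U c = {y. \<exists>e>0. \<forall>z\<in>ball y e. f z = c}" for c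
  have openU: "open (U c)" for c
    unfolding open_contains_ball
  proof
    fix y assume "y \<in> U c"
    then obtain e where e: "e > 0" "\<forall>z\<in>ball y e. f z = c" unfolding U_def by auto
    have "ball y e \<subseteq> U c"
    proof
      fix z assume z: "z \<in> ball y e"
      have "\<forall>w\<in>ball z (e - dist y z). f w = c"
      proof
        fix w assume "w \<in> ball z (e - dist y z)"
        then have "dist y w < e" using dist_triangle[of y w z] by simp
        then show "f w = c" using e by auto
      qed
      moreover have "e - dist y z > 0" using z by simp
      ultimately show "z \<in> U c" unfolding U_def by blast
    qed
    then show "\<exists>e>0. ball y e \<subseteq> U c" using e by blast
  qed
  have Uself: "y \<in> U c \<Longrightarrow> f y = c" for y c unfolding U_def by force
  define N where "N = - (\<Union>c. U c)"
  have Nb: "N \<in> sets borel" unfolding N_def using openU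
    by (intro borel_closed closed_Compl open_UN) auto
  have "AE y in lborel. y \<notin> N" using f_loc_const
  proof eventually_elim
    fix y assume "\<exists>e>0. \<forall>z\<in>ball y e. f z = f y"
    then have "y \<in> U (f y)" unfolding U_def by blast
    then show "y \<notin> N" unfolding N_def by blast
  qed
  then have "emeasure lborel N = 0"
    using AE_iff_measurable[of N lborel "\<lambda>y. y \<notin> N"] Nb by auto
  then have Nnull: "N \<in> null_sets lborel" using Nb by (simp add: null_sets_def)
  have NM: "N \<in> null_sets M" unfolding M_def
    using Nb AE_not_in[OF Nnull] by (subst null_sets_density_iff) (auto elim!: eventually_mono)
  show ?thesis using f_loc_const
  proof eventually_elim
    fix x assume "\<exists>e>0. \<forall>y\<in>ball x e. f y = f x"
    then obtain e where e: "e > 0" "\<forall>y\<in>ball x e. f y = f x" by blast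
    show "x \<in> density_support mu \<longrightarrow>
           (\<lambda>m. measure (sample_law mu m) (knn_agree_event f k x m)) \<longlonglongrightarrow> 1"
    proof
      assume xs: "x \<in> density_support mu"
      define p where "p = measure M (ball x e)"
      have "\<forall>e>0. emeasure M (ball x e) > 0" using xs unfolding density_support_def M_def by simp
      then have "emeasure M (ball x e) > 0" using e(1) by blast
      then have pp: "p > 0" unfolding p_def using M.emeasure_eq_measure[of "ball x e"] by simp
      have p1: "p \<le> 1" unfolding p_def by simp
      define V where "V = U (f x)"
      have Vb: "V \<in> sets borel" unfolding V_def using openU by auto
      have NV: "y \<notin> N \<Longrightarrow> (f y = f x \<longleftrightarrow> y \<in> V)" for y
      proof -
        assume "y \<notin> N"
        then obtain c where c: "y \<in> U c" unfolding N_def by auto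
        then have "f y = c" by (rule Uself)
        then have "y \<in> U (f y)" using c by simp
        then show ?thesis unfolding V_def using Uself[of y "f x"] by metis
      qed
      have Ameas: "knn_agree_event f k x m \<in> sets (completion (PiM {..<m} (\<lambda>_. M)))" for m
      proof -
        let ?P = "PiM {..<m} (\<lambda>_. M)"
        interpret P: prob_space ?P by (intro prob_space_PiM pM)
        define S where "S = {X\<in>space ?P. (\<forall>j\<in>{..<m}. X j \<notin> N) \<and> (\<forall>j\<in>{..<m}. (\<Sum>i<m. if dist x (X i) < dist x (X j) then 1 else 0::real) < real k \<longrightarrow> X j \<in> V)}"
        have Ss: "S \<in> sets ?P" unfolding S_def using Nb Vb sM by (rule meas_S)
        define Z where "Z = (\<Union>j\<in>{..<m}. PiE {..<m} (\<lambda>i. if i = j then N else UNIV))"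
        have Znull: "Z \<in> null_sets ?P" unfolding Z_def
        proof (rule null_sets_UN')
          fix j assume j: "j \<in> {..<m}"
          have NsM: "N \<in> sets M" using NM by auto
          have "PiE {..<m} (\<lambda>i. if i = j then N else UNIV) \<in> sets ?P"
            using NsM sM by (intro sets_PiM_I_finite) auto
          moreover have "emeasure ?P (PiE {..<m} (\<lambda>i. if i = j then N else UNIV)) = 0"
          proof -
            have "emeasure ?P (PiE {..<m} (\<lambda>i. if i = j then N else UNIV))
                = (\<Prod>i<m. emeasure M (if i = j then N else UNIV))"
              using NsM sM by (intro emeasure_PiM_const pM) auto
            also have "\<dots> = 0" using j NM by (intro prod_zero) auto
            finally show ?thesis .
          qed
          ultimately show "PiE {..<m} (\<lambda>i. if i = j then N else UNIV) \<in> null_sets ?P"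
            by (simp add: null_sets_def)
        qed auto
        have spP: "space ?P = PiE {..<m} (\<lambda>_. UNIV)" by (simp add: space_PiM spM)
        have cs: "card {i. i < m \<and> dist x (X i) < dist x (X j)} < k \<longleftrightarrow>
             (\<Sum>i<m. if dist x (X i) < dist x (X j) then 1 else 0::real) < real k" for X j
          by (simp only: card_sum[symmetric]) simp
        have "knn_agree_event f k x m = S \<union> (knn_agree_event f k x m \<inter> Z)"
        proof (intro equalityI subsetI)
          fix X assume XA: "X \<in> knn_agree_event f k x m"
          show "X \<in> S \<union> (knn_agree_event f k x m \<inter> Z)"
          proof (cases "X \<in> Z")
            case False
            have X: "X \<in> PiE {..<m} (\<lambda>_. UNIV)" using XA unfolding knn_agree_event_def by auto
            have XN: "X j \<notin> N" if "j < m" for j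
            proof
              assume "X j \<in> N"
              then have "X \<in> PiE {..<m} (\<lambda>i. if i = j then N else UNIV)" using X
                by (auto simp: PiE_iff)
              then show False using False that unfolding Z_def by auto
            qed
            have "X \<in> S" unfolding S_def spP
              using X XN XA NV unfolding knn_agree_event_def by (auto simp: cs[symmetric])
            then show ?thesis by auto
          qed (use XA in auto)
        next
          fix X assume "X \<in> S \<union> (knn_agree_event f k x m \<inter> Z)"
          then show "X \<in> knn_agree_event f k x m"
          proof
            assume "X \<in> S"
            then show ?thesis unfolding S_def spP knn_agree_event_def
              using NV by (auto simp: cs)
          qed auto
        qed
        then show ?thesis by (rule sets_completionI[OF _ Int_lower2 Znull Ss])
      qed
      show "(\<lambda>m. measure (sample_law mu m) (knn_agree_event f k x m)) \<longlonglongrightarrow> 1"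
      proof (cases "k = 0")
        case True
        have "measure (sample_law mu m) (knn_agree_event f k x m) = 1" for m
        proof -
          let ?P = "PiM {..<m} (\<lambda>_. M)"
          interpret P: prob_space ?P by (intro prob_space_PiM pM)
          have "knn_agree_event f k x m = space ?P"
            using True by (simp add: knn_agree_event_def space_PiM spM)
          then show ?thesis by (simp add: law P.prob_space)
        qed
        then show ?thesis by simp
      next
        case False
        have lo: "eventually (\<lambda>m. 1 - real k * (1 - p) ^ (m div k) \<le> measure (sample_law mu m) (knn_agree_event f k x m)) sequentially"
          unfolding eventually_sequentially
        proof (intro exI allI impI)
          fix m assume km: "k \<le> m"
          let ?P = "PiM {..<m} (\<lambda>_. M)"
          interpret P: prob_space ?P by (intro prob_space_PiM pM)
          interpret C: prob_space "completion ?P" by (rule P.prob_space_completion)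
          have "\<exists>G \<in> sets ?P. G \<subseteq> knn_agree_event f k x m \<and>
             measure ?P G \<ge> 1 - real k * (1 - p) ^ (m div k)"
            by (rule main_bound[OF pM sM spM p_def e(2)]) (use False km in auto)
          then obtain G where G: "G \<in> sets ?P" "G \<subseteq> knn_agree_event f k x m"
              "measure ?P G \<ge> 1 - real k * (1 - p) ^ (m div k)"
            by blast
          have "measure ?P G = measure (completion ?P) G" using G by simp
          also have "\<dots> \<le> measure (completion ?P) (knn_agree_event f k x m)"
            by (rule C.finite_measure_mono[OF G(2) Ameas])
          finally show "1 - real k * (1 - p) ^ (m div k) \<le> measure (sample_law mu m) (knn_agree_event f k x m)"
            using G(3) by (simp add: law)
        qed
        have hi: "eventually (\<lambda>m. measure (sample_law mu m) (knn_agree_event f k x m) \<le> 1) sequentially"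
        proof (intro always_eventually allI)
          fix m :: nat
          let ?P = "PiM {..<m} (\<lambda>_. M)"
          interpret P: prob_space ?P by (intro prob_space_PiM pM)
          interpret C: prob_space "completion ?P" by (rule P.prob_space_completion)
          show "measure (sample_law mu m) (knn_agree_event f k x m) \<le> 1" unfolding law by (rule C.prob_le_1)
        qed
        have "norm (1 - p) < 1" using pp p1 by simp
        then have "(\<lambda>m. (1 - p) ^ m) \<longlonglongrightarrow> 0" by (rule LIMSEQ_power_zero)
        moreover have "filterlim (\<lambda>m. m div k) sequentially sequentially"
          using False by (intro div_filterlim) simp
        ultimately have "(\<lambda>m. (1 - p) ^ (m div k)) \<longlonglongrightarrow> 0"
          by (rule filterlim_compose)
        then have "(\<lambda>m. 1 - real k * (1 - p) ^ (m div k)) \<longlonglongrightarrow> 1 - real k * 0"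
          by (intro tendsto_intros)
        then have "(\<lambda>m. 1 - real k * (1 - p) ^ (m div k)) \<longlonglongrightarrow> 1" by simp
        then show ?thesis by (rule tendsto_sandwich[OF lo hi _ tendsto_const])
      qed
    qed
  qed
qed

end
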